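(* Consider the setting described in the context, with $\rho>0$, $\gamma>0$, symmetric positive semidefinite $P_i,Q_i\in\mathbb{R}^{n\times n}$, and let $\bm{u}^k=(\check{\bm{W}}^k,\hat{\bm{W}}^k,\lambda^k)$ be the sequence generated by the algorithm and $\bm{u}^*=(\check{\bm{W}}^*,\hat{\bm{W}}^*,\lambda^* )$ a KKT point of (P1). Then for every $k\ge 1$, $$\|\bm{u}^k-\bm{u}^*\|^2_{\bm{G}}-\|\bm{u}^{k+1}-\bm{u}^*\|^2_{\bm{G}}\ \ge\ \|\bm{u}^k-\bm{u}^{k+1}\|^2_{\bm{M}},$$ where $$\|\bm{u}^k-\bm{u}^{k+1}\|^2_{\bm{M}}=\|\check{\bm{W}}^k-\check{\bm{W}}^{k+1}\|^2_{\bm{G}_1}+\|\hat{\bm{W}}^k-\hat{\bm{W}}^{k+1}\|^2_{\bm{G}_2-\bm{G}_3}+\frac{2-\gamma}{\gamma^2\rho}\|\lambda^k-\lambda^{k+1}\|^2+\frac{2}{\gamma}(\lambda^k-\lambda^{k+1})^T\bm{A}(\check{\bm{W}}^k-\check{\bm{W}}^{k+1}).$$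
   Context: Let $\mathcal{G}=(\mathcal{V},\mathcal{E})$ be a connected undirected graph with $\mathcal{V}=\{1,\dots,N\}$, $N\ge 2$, and let $d_i$ be the degree of $i$. Variables are $\check{\bm{w}}_i,\hat{\bm{w}}_i\in\mathbb{R}^n$; write $\check{\bm{W}}=(\check{\bm{w}}_1,\dots,\check{\bm{w}}_N)\in\mathbb{R}^{Nn}$, $\hat{\bm{W}}$ likewise, $\bm{z}_i=(\check{\bm{w}}_i,\hat{\bm{w}}_i)$, $\bm{Z}=(\check{\bm{W}},\hat{\bm{W}})$. The matrix $\bm{A}\in\mathbb{R}^{|\mathcal{E}|n\times Nn}$ has one block row per edge $\{i,j\}$ ($i<j$) with $I_n$ in block column $i$, $-I_n$ in block column $j$ and zeros elsewhere; $A_i$ denotes its $i$-th block column, so $\bm{A}\check{\bm{W}}=\sum_i A_i\check{\bm{w}}_i$, $A_i^TA_i=d_iI_n$, and for $i\ne j$, $A_i^TA_j=-I_n$ if $\{i,j\}\in\mathcal{E}$ and $0$ otherwise. Each $f_i:\mathbb{R}^n\times\mathbb{R}^n\to\mathbb{R}$ is differentiable and jointly convex in $(\check{\bm{w}}_i,\hat{\bm{w}}_i)$, with $\|\nabla f_i(\bm{z}^1)-\nabla f_i(\bm{z}^2)\|\le C_i\|\bm{z}^1-\bm{z}^2\|$ for all $\bm{z}^1,\bm{z}^2$. Let $\mu_1\ge0$, $\mu_2>0$, $F_i(\bm{z}_i)=f_i(\check{\bm{w}}_i,\hat{\bm{w}}_i)+\frac{\mu_1}{2}\|\check{\bm{w}}_i\|^2+\frac{\mu_2}{2}\|\hat{\bm{w}}_i\|^2$,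 $\bm{F}(\bm{Z})=\sum_iF_i(\bm{z}_i)$, and let $m$ be a constant with $0<m\le\mu_2$ (a strong convexity modulus of $\hat{\bm{w}}\mapsto\frac{\mu_2}{2}\|\hat{\bm{w}}\|^2$). Problem (P1): minimize $\bm{F}(\bm{Z})$ subject to $\bm{A}\check{\bm{W}}=0$. A KKT point of (P1) is $(\check{\bm{W}}^*,\hat{\bm{W}}^*,\lambda^* )$ with $\bm{A}\check{\bm{W}}^*=0$, $A_i^T\lambda^*=\nabla_{\check{\bm{w}}_i}F_i(\bm{z}_i^* )$, $\nabla_{\hat{\bm{w}}_i}F_i(\bm{z}_i^* )=0$ for all $i$. Algorithm: with $\mathcal{L}_\rho(\check{\bm{W}},\hat{\bm{W}},\lambda)=\bm{F}(\bm{Z})-\lambda^T\bm{A}\check{\bm{W}}+\frac{\rho}{2}\|\bm{A}\check{\bm{W}}\|^2$, starting from arbitrary $\check{\bm{W}}^0,\hat{\bm{W}}^0,\lambda^0$, for $k=0,1,\dots$: (i) for all $i$ in parallel, $\check{\bm{w}}_i^{k+1}=\arg\min_{\check{\bm{w}}_i}\mathcal{L}_\rho(\check{\bm{w}}_i,\check{\bm{W}}^k_{-i},\hat{\bm{W}}^k,\lambda^k)+\frac12\|\check{\bm{w}}_i-\check{\bm{w}}_i^k\|^2_{P_i}$, where $\check{\bm{W}}^k_{-i}$ are the other blocks at iteration $k$; (ii) $\lambda^{k+1}=\lambda^k-\gamma\rho\bm{A}\check{\bm{W}}^{k+1}$; (iii) for all $i$ in parallel, $\hat{\bm{w}}_i^{k+1}=\arg\min_{\hat{\bm{w}}_i}F_i(\check{\bm{w}}_i^{k+1},\hat{\bm{w}}_i)+\frac12\|\hat{\bm{w}}_i-\hat{\bm{w}}_i^k\|^2_{Q_i}$.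 Notation: $\|x\|_S^2=x^TSx$; $\bm{G}_1=\mathrm{blkdiag}(\rho A_i^TA_i+P_i)_{i}$, $\bm{G}_2=\mathrm{blkdiag}(Q_i)_i$, $\bm{G}_3=\mathrm{blkdiag}\big(\frac{C_i}{m}(C_i+m)I_n\big)_i$, $\bm{G}=\mathrm{blkdiag}(\bm{G}_1,\bm{G}_2,\frac{1}{\gamma\rho}I)$, and $\bm{M}=\begin{bmatrix}\bm{G}_1&0&\frac1\gamma\bm{A}^T\\0&\bm{G}_2-\bm{G}_3&0\\\frac1\gamma\bm{A}&0&\frac{2-\gamma}{\gamma^2\rho}I\end{bmatrix}$. *)

theory Defs
  imports "HOL-Analysis.Analysis"
begin

type_synonym 'n vec = "real ^ 'n"
type_synonym edge = "nat \<times> nat"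

text \<open>Graph on vertices {1..N}; each undirected edge {i,j} with i<j is stored as the pair (i,j).\<close>
definition connected_graph :: "nat \<Rightarrow> edge set \<Rightarrow> bool" where
  "connected_graph N E \<longleftrightarrow>
     E \<subseteq> {(i,j). 1 \<le> i \<and> i < j \<and> j \<le> N} \<and>
     (\<forall>i\<in>{1..N}. \<forall>j\<in>{1..N}. (i,j) \<in> (E \<union> E\<inverse>)\<^sup>*)"

text \<open>Block column A_i applied to x (one block per edge): x on edges (i,j), -x on edges (j,i).\<close>
definition Acol :: "edge set \<Rightarrow> nat \<Rightarrow> 'n::finite vec \<Rightarrow> edge \<Rightarrow> 'n::finite vec" where
  "Acol E i x = (\<lambda>e. if e \<in> E \<and> fst e = i then x else if e \<in> E \<and> snd e = i then - x else 0)"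

definition AW :: "edge set \<Rightarrow> (nat \<Rightarrow> 'n::finite vec) \<Rightarrow> edge \<Rightarrow> 'n::finite vec" where
  "AW E W = (\<lambda>e. if e \<in> E then W (fst e) - W (snd e) else 0)"

definition ATi :: "edge set \<Rightarrow> nat \<Rightarrow> (edge \<Rightarrow> 'n::finite vec) \<Rightarrow> 'n::finite vec" where
  "ATi E i lam = (\<Sum>e\<in>E. (if fst e = i then lam e else if snd e = i then - lam e else 0))"

definition einner :: "edge set \<Rightarrow> (edge \<Rightarrow> 'n::finite vec) \<Rightarrow> (edge \<Rightarrow> 'n::finite vec) \<Rightarrow> real" where
  "einner E a b = (\<Sum>e\<in>E. a e \<bullet> b e)"

definition qf :: "real ^ 'n::finite ^ 'n::finite \<Rightarrow> 'n::finite vec \<Rightarrow> real" where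
  "qf S x = x \<bullet> (S *v x)"

definition psd_sym :: "real ^ 'n::finite ^ 'n::finite \<Rightarrow> bool" where
  "psd_sym S \<longleftrightarrow> transpose S = S \<and> (\<forall>x. 0 \<le> qf S x)"

definition Fi :: "(nat \<Rightarrow> 'n::finite vec \<times> 'n::finite vec \<Rightarrow> real) \<Rightarrow> real \<Rightarrow> real \<Rightarrow> nat \<Rightarrow> 'n::finite vec \<Rightarrow> 'n::finite vec \<Rightarrow> real" where
  "Fi f mu1 mu2 i w v = f i (w, v) + mu1 / 2 * (norm w)\<^sup>2 + mu2 / 2 * (norm v)\<^sup>2"

definition FF :: "(nat \<Rightarrow> 'n::finite vec \<times> 'n::finite vec \<Rightarrow> real) \<Rightarrow> real \<Rightarrow> real \<Rightarrow> nat \<Rightarrow> (nat \<Rightarrow> 'n::finite vec) \<Rightarrow> (nat \<Rightarrow> 'n::finite vec) \<Rightarrow> real" where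
  "FF f mu1 mu2 N Wc Wh = (\<Sum>i\<in>{1..N}. Fi f mu1 mu2 i (Wc i) (Wh i))"

definition Lag :: "(nat \<Rightarrow> 'n::finite vec \<times> 'n::finite vec \<Rightarrow> real) \<Rightarrow> real \<Rightarrow> real \<Rightarrow> nat \<Rightarrow> edge set \<Rightarrow> real
    \<Rightarrow> (nat \<Rightarrow> 'n::finite vec) \<Rightarrow> (nat \<Rightarrow> 'n::finite vec) \<Rightarrow> (edge \<Rightarrow> 'n::finite vec) \<Rightarrow> real" where
  "Lag f mu1 mu2 N E rho Wc Wh lam =
     FF f mu1 mu2 N Wc Wh - einner E lam (AW E Wc) + rho / 2 * einner E (AW E Wc) (AW E Wc)"

text \<open>KKT point of (P1); grad i z is the gradient of f_i at z = (check w, hat w).\<close>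
definition KKT :: "(nat \<Rightarrow> 'n::finite vec \<times> 'n::finite vec \<Rightarrow> 'n::finite vec \<times> 'n::finite vec) \<Rightarrow> real \<Rightarrow> real \<Rightarrow> nat \<Rightarrow> edge set
    \<Rightarrow> (nat \<Rightarrow> 'n::finite vec) \<Rightarrow> (nat \<Rightarrow> 'n::finite vec) \<Rightarrow> (edge \<Rightarrow> 'n::finite vec) \<Rightarrow> bool" where
  "KKT grad mu1 mu2 N E Wc Wh lam \<longleftrightarrow>
     (\<forall>e\<in>E. AW E Wc e = 0) \<and>
     (\<forall>i\<in>{1..N}. ATi E i lam = fst (grad i (Wc i, Wh i)) + mu1 *\<^sub>R Wc i \<and>
                  snd (grad i (Wc i, Wh i)) + mu2 *\<^sub>R Wh i = 0)"

text \<open>The iteration (i)-(iii), stated via minimality of the subproblem solutions.\<close>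
definition alg_seq :: "(nat \<Rightarrow> 'n::finite vec \<times> 'n::finite vec \<Rightarrow> real) \<Rightarrow> real \<Rightarrow> real \<Rightarrow> nat \<Rightarrow> edge set \<Rightarrow> real \<Rightarrow> real
    \<Rightarrow> (nat \<Rightarrow> real ^ 'n::finite ^ 'n::finite) \<Rightarrow> (nat \<Rightarrow> real ^ 'n::finite ^ 'n::finite)
    \<Rightarrow> (nat \<Rightarrow> nat \<Rightarrow> 'n::finite vec) \<Rightarrow> (nat \<Rightarrow> nat \<Rightarrow> 'n::finite vec) \<Rightarrow> (nat \<Rightarrow> edge \<Rightarrow> 'n::finite vec) \<Rightarrow> bool" where
  "alg_seq f mu1 mu2 N E rho gamma P Q Wc Wh lam \<longleftrightarrow>
     (\<forall>k. \<forall>i\<in>{1..N}. \<forall>w.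
        Lag f mu1 mu2 N E rho ((Wc k)(i := Wc (Suc k) i)) (Wh k) (lam k)
          + 1/2 * qf (P i) (Wc (Suc k) i - Wc k i)
        \<le> Lag f mu1 mu2 N E rho ((Wc k)(i := w)) (Wh k) (lam k)
          + 1/2 * qf (P i) (w - Wc k i)) \<and>
     (\<forall>k. \<forall>e\<in>E. lam (Suc k) e = lam k e - (gamma * rho) *\<^sub>R AW E (Wc (Suc k)) e) \<and>
     (\<forall>k. \<forall>i\<in>{1..N}. \<forall>v.
        Fi f mu1 mu2 i (Wc (Suc k) i) (Wh (Suc k) i) + 1/2 * qf (Q i) (Wh (Suc k) i - Wh k i)
        \<le> Fi f mu1 mu2 i (Wc (Suc k) i) v + 1/2 * qf (Q i) (v - Wh k i))"

text \<open>||(dWc,dWh,dlam)||_G^2 with G = blkdiag(G1, G2, 1/(gamma rho) I),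
  G1 = blkdiag(rho A_i^T A_i + P_i), G2 = blkdiag(Q_i).\<close>
definition normG :: "nat \<Rightarrow> edge set \<Rightarrow> real \<Rightarrow> real \<Rightarrow> (nat \<Rightarrow> real ^ 'n::finite ^ 'n::finite) \<Rightarrow> (nat \<Rightarrow> real ^ 'n::finite ^ 'n::finite)
    \<Rightarrow> (nat \<Rightarrow> 'n::finite vec) \<Rightarrow> (nat \<Rightarrow> 'n::finite vec) \<Rightarrow> (edge \<Rightarrow> 'n::finite vec) \<Rightarrow> real" where
  "normG N E rho gamma P Q dWc dWh dlam =
     (\<Sum>i\<in>{1..N}. rho * einner E (Acol E i (dWc i)) (Acol E i (dWc i)) + qf (P i) (dWc i))
     + (\<Sum>i\<in>{1..N}. qf (Q i) (dWh i))
     + 1 / (gamma * rho) * einner E dlam dlam"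

text \<open>||(dWc,dWh,dlam)||_M^2, expanded as in the statement; G3 = blkdiag(C_i/m (C_i+m) I).\<close>
definition normM :: "nat \<Rightarrow> edge set \<Rightarrow> real \<Rightarrow> real \<Rightarrow> (nat \<Rightarrow> real ^ 'n::finite ^ 'n::finite) \<Rightarrow> (nat \<Rightarrow> real ^ 'n::finite ^ 'n::finite)
    \<Rightarrow> (nat \<Rightarrow> real) \<Rightarrow> real \<Rightarrow> (nat \<Rightarrow> 'n::finite vec) \<Rightarrow> (nat \<Rightarrow> 'n::finite vec) \<Rightarrow> (edge \<Rightarrow> 'n::finite vec) \<Rightarrow> real" where
  "normM N E rho gamma P Q C m dWc dWh dlam =
     (\<Sum>i\<in>{1..N}. rho * einner E (Acol E i (dWc i)) (Acol E i (dWc i)) + qf (P i) (dWc i))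
     + (\<Sum>i\<in>{1..N}. qf (Q i) (dWh i) - C i / m * (C i + m) * (norm (dWh i))\<^sup>2)
     + (2 - gamma) / (gamma\<^sup>2 * rho) * einner E dlam dlam
     + 2 / gamma * einner E dlam (AW E dWc)"

end

theory Submission
  imports Defs
begin


lemma line_deriv:
  fixes g :: "'a::real_inner \<Rightarrow> real"
  assumes "\<forall>z. (g has_derivative (\<lambda>h. G z \<bullet> h)) (at z)"
  shows "((\<lambda>t. g (a + t *\<^sub>R d)) has_real_derivative (G (a + t *\<^sub>R d) \<bullet> d)) (at t)"
proof -
  have h1: "((\<lambda>t. a + t *\<^sub>R d) has_derivative (\<lambda>s. s *\<^sub>R d)) (at t)"
    by (auto intro!: derivative_eq_intros)
  have "((\<lambda>t. g (a + t *\<^sub>R d)) has_derivative (\<lambda>s. G (a + t *\<^sub>R d) \<bullet> (s *\<^sub>R d))) (at t)"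
    using has_derivative_compose[OF h1 assms[rule_format, of "a + t *\<^sub>R d"]] by (simp add: o_def)
  then show ?thesis unfolding has_field_derivative_def
    by (rule has_derivative_eq_rhs) (auto simp: fun_eq_iff inner_commute mult.commute)
qed

lemma tangent_ineq:
  fixes g :: "'a::real_inner \<Rightarrow> real"
  assumes cv: "convex_on UNIV g" and d: "\<forall>z. (g has_derivative (\<lambda>h. G z \<bullet> h)) (at z)"
  shows "g w \<ge> g z + G z \<bullet> (w - z)"
proof -
  define phi where "phi t = g (z + t *\<^sub>R (w - z))" for t
  have "convex_on UNIV phi"
  proof (rule convex_onI[OF _ convex_UNIV])
    fix t x y :: real assume t: "0 < t" "t < 1"
    have eq: "z + ((1 - t) *\<^sub>R x + t *\<^sub>R y) *\<^sub>R (w - z) = (1 - t) *\<^sub>R (z + x *\<^sub>R (w - z)) + t *\<^sub>R (z + y *\<^sub>R (w - z))"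
      by (simp add: algebra_simps)
    show "phi ((1 - t) *\<^sub>R x + t *\<^sub>R y) \<le> (1 - t) * phi x + t * phi y"
      unfolding phi_def eq using convex_onD[OF cv, of t] t by auto
  qed
  moreover have "(phi has_real_derivative (G z \<bullet> (w - z))) (at 0)"
    using line_deriv[OF d, of z "w - z" 0] unfolding phi_def by simp
  ultimately have "phi 1 - phi 0 \<ge> (G z \<bullet> (w - z)) * (1 - 0)"
    by (intro convex_on_imp_above_tangent) auto
  then show ?thesis unfolding phi_def by simp
qed

lemma descent_ineq:
  fixes g :: "'a::real_inner \<Rightarrow> real"
  assumes d: "\<forall>z. (g has_derivative (\<lambda>h. G z \<bullet> h)) (at z)"
    and L: "\<forall>z1 z2. norm (G z1 - G z2) \<le> C * norm (z1 - z2)"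
  shows "g b \<le> g a + G a \<bullet> (b - a) + C / 2 * (norm (b - a))\<^sup>2"
proof -
  define phi where "phi t = g (a + t *\<^sub>R (b - a)) - t * (G a \<bullet> (b - a)) - C / 2 * t\<^sup>2 * (norm (b - a))\<^sup>2" for t
  have "phi 0 \<ge> phi 1"
  proof (rule DERIV_nonpos_imp_nonincreasing[of 0 1 phi])
    fix t :: real assume t: "0 \<le> t" "t \<le> 1"
    have D: "(phi has_real_derivative (G (a + t *\<^sub>R (b - a)) \<bullet> (b - a) - G a \<bullet> (b - a) - C * t * (norm (b - a))\<^sup>2)) (at t)"
      unfolding phi_def using line_deriv[OF d, of a "b - a" t]
      by (auto intro!: derivative_eq_intros)
    have I: "G (a + t *\<^sub>R (b - a)) \<bullet> (b - a) - G a \<bullet> (b - a) \<le> C * t * (norm (b - a))\<^sup>2"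
    proof -
      have "G (a + t *\<^sub>R (b - a)) \<bullet> (b - a) - G a \<bullet> (b - a) = (G (a + t *\<^sub>R (b - a)) - G a) \<bullet> (b - a)"
        by (simp add: inner_diff_left)
      also have "\<dots> \<le> norm (G (a + t *\<^sub>R (b - a)) - G a) * norm (b - a)"
        by (rule norm_cauchy_schwarz)
      also have "\<dots> \<le> (C * norm (t *\<^sub>R (b - a))) * norm (b - a)"
        using L[rule_format, of "a + t *\<^sub>R (b - a)" a] by (intro mult_right_mono) auto
      also have "\<dots> = C * t * (norm (b - a))\<^sup>2" using t by (simp add: power2_eq_square)
      finally show ?thesis .
    qed
    show "\<exists>y. (phi has_real_derivative y) (at t) \<and> y \<le> 0"
      apply (rule exI[of _ "G (a + t *\<^sub>R (b - a)) \<bullet> (b - a) - G a \<bullet> (b - a) - C * t * (norm (b - a))\<^sup>2"])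
      using D I by simp
  qed simp
  then show ?thesis unfolding phi_def by (simp add: algebra_simps)
qed

lemma fermat_line:
  fixes psi :: "real \<Rightarrow> real"
  assumes "(phi has_real_derivative D) (at 0)"
    and "\<forall>t. psi t = psi 0 + (phi t - phi 0) + t * L + t\<^sup>2 * R"
    and "\<forall>t. psi 0 \<le> psi t"
  shows "D + L = 0"
proof -
  have "((\<lambda>t. psi 0 + (phi t - phi 0) + t * L + t\<^sup>2 * R) has_real_derivative (D + L)) (at 0)"
    by (rule assms(1)[THEN DERIV_cong[OF DERIV_add[OF DERIV_add[OF DERIV_add[OF DERIV_const DERIV_diff[OF _ DERIV_const]]]]]])
       (auto intro!: derivative_eq_intros)
  then have "(psi has_real_derivative (D + L)) (at 0)"
    using assms(2) by (metis (no_types, lifting) ext)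
  then show ?thesis
    using DERIV_local_min[OF _ zero_less_one] assms(3) by blast
qed

lemma qf_sym: assumes "transpose S = S" shows "x \<bullet> (S *v y) = y \<bullet> (S *v (x::real^'n))"
proof -
  have "x \<bullet> (S *v y) = (x v* S) \<bullet> y" by (simp add: dot_lmul_matrix)
  also have "x v* S = transpose S *v x" by simp
  finally show ?thesis using assms by (simp add: inner_commute)
qed

lemma qf_add: assumes "transpose S = S"
  shows "qf S (a + b) = qf S a + 2 * (a \<bullet> (S *v b)) + qf S b"
  unfolding qf_def using qf_sym[OF assms, of b a]
  by (simp add: matrix_vector_right_distrib inner_add_left inner_add_right)


lemma AW_upd:
  assumes "\<forall>e\<in>E. fst e \<noteq> snd e"
  shows "AW E (W(i := W i + t *\<^sub>R d)) e = AW E W e + t *\<^sub>R Acol E i d e"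
  using assms unfolding AW_def Acol_def by (auto simp: algebra_simps)

lemma Acol_add: "Acol E i (a + b) e = Acol E i a e + Acol E i b e"
  unfolding Acol_def by auto

lemma Acol_scale: "Acol E i (t *\<^sub>R a) e = t *\<^sub>R Acol E i a e"
  unfolding Acol_def by auto

lemma sum_Acol:
  assumes V: "E \<subseteq> {(i,j). 1 \<le> i \<and> i < j \<and> j \<le> N}" and e: "e \<in> E"
  shows "(\<Sum>i\<in>{1..N}. Acol E i (d i) e) = AW E d e"
proof -
  obtain p q where pq: "e = (p, q)" "1 \<le> p" "p < q" "q \<le> N" using V e by auto
  have "(\<Sum>i\<in>{1..N}. Acol E i (d i) e) = (\<Sum>i\<in>{1..N}. (if i = p then d i else 0) + (if i = q then - d i else 0))"
    by (rule sum.cong) (use pq e in \<open>auto simp: Acol_def\<close>)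
  also have "\<dots> = d p - d q" using pq by (simp add: sum.distrib)
  finally show ?thesis using pq e by (simp add: AW_def)
qed

lemma einner_sum_Acol:
  assumes V: "E \<subseteq> {(i,j). 1 \<le> i \<and> i < j \<and> j \<le> N}"
  shows "(\<Sum>i\<in>{1..N}. einner E L (Acol E i (d i))) = einner E L (AW E d)"
proof -
  have "(\<Sum>i\<in>{1..N}. einner E L (Acol E i (d i))) = (\<Sum>e\<in>E. \<Sum>i\<in>{1..N}. L e \<bullet> Acol E i (d i) e)"
    unfolding einner_def by (rule sum.swap)
  also have "\<dots> = (\<Sum>e\<in>E. L e \<bullet> AW E d e)"
    by (rule sum.cong[OF refl]) (metis inner_sum_right sum_Acol[OF V])
  finally show ?thesis unfolding einner_def .
qed

lemma ATi_inner: "ATi E i lam \<bullet> d = einner E lam (Acol E i d)"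
  unfolding ATi_def einner_def inner_sum_left
  by (rule sum.cong) (auto simp: Acol_def)

lemma einner_expand: "einner E (\<lambda>e. a e + b e) (\<lambda>e. a e + b e) = einner E a a + 2 * einner E a b + einner E b b"
  unfolding einner_def by (simp add: inner_add_left inner_add_right sum.distrib sum_distrib_left inner_commute)


lemma inner_pair_fst: "p \<bullet> (d, 0) = fst p \<bullet> d" by (cases p) simp
lemma inner_pair_snd: "p \<bullet> (0, d) = snd p \<bullet> d" by (cases p) simp

lemma qf_line: assumes "transpose S = S"
  shows "qf S (v + t *\<^sub>R d) = qf S v + 2 * t * (v \<bullet> (S *v d)) + t\<^sup>2 * qf S (d::real^'n::finite)"
  unfolding qf_add[OF assms] by (simp add: qf_def matrix_vector_mult_scaleR power2_eq_square)

lemma norm_line: "(norm (v + t *\<^sub>R d))\<^sup>2 = (norm v)\<^sup>2 + 2 * t * (v \<bullet> d) + t\<^sup>2 * (norm (d::'a::real_inner))\<^sup>2"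
  by (simp only: power2_norm_eq_inner inner_add_left inner_add_right inner_scaleR_left inner_scaleR_right inner_commute[of d v])
     (simp add: power2_eq_square algebra_simps)

lemma einner_line: "einner E (\<lambda>e. a e + t *\<^sub>R b e) (\<lambda>e. a e + t *\<^sub>R b e) = einner E a a + 2 * t * einner E a b + t\<^sup>2 * einner E b b"
  unfolding einner_expand by (simp add: einner_def sum_distrib_left power2_eq_square mult.assoc)

lemma einner_lin_right: "einner E l (\<lambda>e. a e + t *\<^sub>R b e) = einner E l a + t * einner E l b"
  unfolding einner_def by (simp add: inner_add_right sum.distrib sum_distrib_left)

lemma FF_upd:
  assumes "i \<in> {1..N}"
  shows "FF f mu1 mu2 N (W(i := w)) Y = FF f mu1 mu2 N (W(i := w')) Y + Fi f mu1 mu2 i w (Y i) - Fi f mu1 mu2 i w' (Y i)"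
proof -
  have "FF f mu1 mu2 N (W(i := w)) Y = Fi f mu1 mu2 i w (Y i) + (\<Sum>j\<in>{1..N} - {i}. Fi f mu1 mu2 j (W j) (Y j))"
    unfolding FF_def using assms by (subst sum.remove[of _ i]) (auto intro!: sum.cong)
  moreover have "FF f mu1 mu2 N (W(i := w')) Y = Fi f mu1 mu2 i w' (Y i) + (\<Sum>j\<in>{1..N} - {i}. Fi f mu1 mu2 j (W j) (Y j))"
    unfolding FF_def using assms by (subst sum.remove[of _ i]) (auto intro!: sum.cong)
  ultimately show ?thesis by simp
qed

lemma opt_x:
  fixes W Y :: "nat \<Rightarrow> real ^ 'n::finite"
  assumes V: "E \<subseteq> {(i,j). 1 \<le> i \<and> i < j \<and> j \<le> N}" and i: "i \<in> {1..N}"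
    and deriv: "\<forall>z. (f i has_derivative (\<lambda>h. grad i z \<bullet> h)) (at z)"
    and sym: "transpose (P i) = P i"
    and mn: "\<forall>w. Lag f mu1 mu2 N E rho (W(i := w0)) Y lamk + 1/2 * qf (P i) (w0 - W i)
               \<le> Lag f mu1 mu2 N E rho (W(i := w)) Y lamk + 1/2 * qf (P i) (w - W i)"
  shows "fst (grad i (w0, Y i)) \<bullet> d + mu1 * (w0 \<bullet> d) - einner E lamk (Acol E i d)
         + rho * einner E (AW E (W(i := w0))) (Acol E i d) + (w0 - W i) \<bullet> (P i *v d) = 0"
proof -
  define W0 where "W0 = W(i := w0)"
  have irr: "\<forall>e\<in>E. fst e \<noteq> snd e" using V by auto
  define psi where "psi t = Lag f mu1 mu2 N E rho (W(i := w0 + t *\<^sub>R d)) Y lamk + 1/2 * qf (P i) (w0 + t *\<^sub>R d - W i)" for t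
  define phi where "phi t = f i (w0 + t *\<^sub>R d, Y i)" for t
  define L where "L = mu1 * (w0 \<bullet> d) - einner E lamk (Acol E i d)
         + rho * einner E (AW E W0) (Acol E i d) + (w0 - W i) \<bullet> (P i *v d)"
  define R where "R = mu1 / 2 * (norm d)\<^sup>2 + rho / 2 * einner E (Acol E i d) (Acol E i d) + 1/2 * qf (P i) d"
  have upd: "W(i := w0 + t *\<^sub>R d) = W0(i := W0 i + t *\<^sub>R d)" for t unfolding W0_def by simp
  have AWt: "AW E (W(i := w0 + t *\<^sub>R d)) = (\<lambda>e. AW E W0 e + t *\<^sub>R Acol E i d e)" for t
    unfolding upd by (rule ext, rule AW_upd[OF irr])
  define K where "K = FF f mu1 mu2 N W0 Y - Fi f mu1 mu2 i w0 (Y i) + mu2 / 2 * (norm (Y i))\<^sup>2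
     - einner E lamk (AW E W0) + rho / 2 * einner E (AW E W0) (AW E W0) + 1/2 * qf (P i) (w0 - W i)"
  define el where "el = einner E lamk (Acol E i d)"
  define vd where "vd = einner E (AW E W0) (Acol E i d)"
  define dd where "dd = einner E (Acol E i d) (Acol E i d)"
  define pv where "pv = (w0 - W i) \<bullet> (P i *v d)"
  define qd where "qd = qf (P i) d"
  have ex: "psi t = K + phi t + mu1 / 2 * ((norm w0)\<^sup>2 + 2 * t * (w0 \<bullet> d) + t\<^sup>2 * (norm d)\<^sup>2)
     - t * el + rho / 2 * (2 * t * vd + t\<^sup>2 * dd) + 1/2 * (2 * t * pv + t\<^sup>2 * qd)" for t
  proof -
    have 1: "FF f mu1 mu2 N (W(i := w0 + t *\<^sub>R d)) Y = FF f mu1 mu2 N W0 Y + Fi f mu1 mu2 i (w0 + t *\<^sub>R d) (Y i) - Fi f mu1 mu2 i w0 (Y i)"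
      unfolding W0_def by (rule FF_upd[OF i])
    have 2: "qf (P i) (w0 + t *\<^sub>R d - W i) = qf (P i) (w0 - W i) + 2 * t * pv + t\<^sup>2 * qd"
      using qf_line[OF sym, of "w0 - W i" t d] unfolding pv_def qd_def by (simp add: diff_add_eq)
    have 3: "Fi f mu1 mu2 i (w0 + t *\<^sub>R d) (Y i) = phi t + mu1 / 2 * ((norm w0)\<^sup>2 + 2 * t * (w0 \<bullet> d) + t\<^sup>2 * (norm d)\<^sup>2) + mu2 / 2 * (norm (Y i))\<^sup>2"
      unfolding Fi_def phi_def norm_line ..
    have 4: "Lag f mu1 mu2 N E rho (W(i := w0 + t *\<^sub>R d)) Y lamk =
       FF f mu1 mu2 N (W(i := w0 + t *\<^sub>R d)) Y - (einner E lamk (AW E W0) + t * el)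
       + rho / 2 * (einner E (AW E W0) (AW E W0) + 2 * t * vd + t\<^sup>2 * dd)"
      unfolding Lag_def AWt einner_line einner_lin_right el_def vd_def dd_def ..
    show ?thesis unfolding psi_def 4 1 2 3 K_def by (simp add: algebra_simps power2_eq_square)
  qed
  have EQ: "\<forall>t. psi t = psi 0 + (phi t - phi 0) + t * L + t\<^sup>2 * R"
  proof
    fix t
    have L: "L = mu1 * (w0 \<bullet> d) - el + rho * vd + pv" unfolding L_def el_def vd_def pv_def ..
    have R: "R = mu1 / 2 * (norm d)\<^sup>2 + rho / 2 * dd + 1/2 * qd" unfolding R_def dd_def qd_def ..
    show "psi t = psi 0 + (phi t - phi 0) + t * L + t\<^sup>2 * R"
      unfolding ex L R by (simp add: algebra_simps power2_eq_square)
  qed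
  have MIN: "\<forall>t. psi 0 \<le> psi t" unfolding psi_def using mn by simp
  have DD: "(phi has_real_derivative (fst (grad i (w0, Y i)) \<bullet> d)) (at 0)"
    using line_deriv[OF deriv, of "(w0, Y i)" "(d, 0)" 0] unfolding phi_def by (simp add: inner_pair_fst)
  have "fst (grad i (w0, Y i)) \<bullet> d + L = 0" by (rule fermat_line[OF DD EQ MIN])
  then show ?thesis unfolding L_def W0_def by simp
qed

lemma opt_y:
  fixes x v0 Y :: "real ^ 'n::finite"
  assumes deriv: "\<forall>z. (f i has_derivative (\<lambda>h. grad i z \<bullet> h)) (at z)"
    and sym: "transpose Q = Q"
    and mn: "\<forall>v. Fi f mu1 mu2 i x v0 + 1/2 * qf Q (v0 - Y) \<le> Fi f mu1 mu2 i x v + 1/2 * qf Q (v - Y)"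
  shows "snd (grad i (x, v0)) \<bullet> d + mu2 * (v0 \<bullet> d) + (v0 - Y) \<bullet> (Q *v d) = 0"
proof -
  define psi where "psi t = Fi f mu1 mu2 i x (v0 + t *\<^sub>R d) + 1/2 * qf Q (v0 + t *\<^sub>R d - Y)" for t
  define phi where "phi t = f i (x, v0 + t *\<^sub>R d)" for t
  define L where "L = mu2 * (v0 \<bullet> d) + (v0 - Y) \<bullet> (Q *v d)"
  define R where "R = mu2 / 2 * (norm d)\<^sup>2 + 1/2 * qf Q d"
  have q: "qf Q (v0 + t *\<^sub>R d - Y) = qf Q (v0 - Y) + 2 * t * ((v0 - Y) \<bullet> (Q *v d)) + t\<^sup>2 * qf Q d" for t
    using qf_line[OF sym, of "v0 - Y" t d] by (simp add: diff_add_eq)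
  define pv where "pv = (v0 - Y) \<bullet> (Q *v d)"
  define q0 where "q0 = qf Q (v0 - Y)"
  define qd where "qd = qf Q d"
  define K where "K = mu1 / 2 * (norm x)\<^sup>2"
  have ps: "psi t = phi t + K + mu2 / 2 * ((norm v0)\<^sup>2 + 2 * t * (v0 \<bullet> d) + t\<^sup>2 * (norm d)\<^sup>2)
     + 1/2 * (q0 + 2 * t * pv + t\<^sup>2 * qd)" for t
    unfolding psi_def phi_def Fi_def q norm_line pv_def q0_def qd_def K_def ..
  have L: "L = mu2 * (v0 \<bullet> d) + pv" unfolding L_def pv_def ..
  have R: "R = mu2 / 2 * (norm d)\<^sup>2 + 1/2 * qd" unfolding R_def qd_def ..
  have EQ: "\<forall>t. psi t = psi 0 + (phi t - phi 0) + t * L + t\<^sup>2 * R"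
    unfolding ps L R by (simp add: algebra_simps power2_eq_square)
  have MIN: "\<forall>t. psi 0 \<le> psi t" unfolding psi_def using mn by simp
  have DD: "(phi has_real_derivative (snd (grad i (x, v0)) \<bullet> d)) (at 0)"
    using line_deriv[OF deriv, of "(x, v0)" "(0, d)" 0] unfolding phi_def by (simp add: inner_pair_snd)
  have "snd (grad i (x, v0)) \<bullet> d + L = 0" by (rule fermat_line[OF DD EQ MIN])
  then show ?thesis unfolding L_def by simp
qed


lemma inner_pair_gen: "p \<bullet> (u, v) = fst p \<bullet> u + snd p \<bullet> v" by (cases p) simp

lemma young_aux:
  fixes C p q m :: real
  assumes "m > 0" "p \<ge> 0" "q \<ge> 0"
  shows "- C * p\<^sup>2 - 2 * C * p * q + 2 * m * q\<^sup>2 \<ge> - (C / m * (C + m) * p\<^sup>2)"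
proof -
  have e: "C\<^sup>2 * p\<^sup>2 / (2 * m) + 2 * m * q\<^sup>2 - 2 * C * p * q = (2 * m * q - C * p)\<^sup>2 / (2 * m)"
    using assms by (simp add: field_simps power2_eq_square)
  have "(2 * m * q - C * p)\<^sup>2 / (2 * m) \<ge> 0" using assms by simp
  moreover have "C\<^sup>2 * p\<^sup>2 / (2 * m) \<le> C\<^sup>2 * p\<^sup>2 / m"
    using assms by (simp add: divide_left_mono frac_le)
  moreover have "C / m * (C + m) * p\<^sup>2 = C\<^sup>2 * p\<^sup>2 / m + C * p\<^sup>2"
    using assms by (simp add: field_simps power2_eq_square)
  ultimately show ?thesis using e by linarith
qed

lemma conv_i:
  fixes g :: "(real ^ 'n::finite) \<times> (real ^ 'n) \<Rightarrow> real" and G :: "_ \<Rightarrow> (real ^ 'n) \<times> (real ^ 'n)"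
  assumes cv: "convex_on UNIV g" and deriv: "\<forall>z. (g has_derivative (\<lambda>h. G z \<bullet> h)) (at z)"
    and Lip: "\<forall>z1 z2. norm (G z1 - G z2) \<le> C * norm (z1 - z2)"
    and m: "0 < m" "m \<le> mu2" and mu1: "0 \<le> mu1"
  shows "2 * ((fst (G (x1, yk)) \<bullet> (x1 - xs) + mu1 * (x1 \<bullet> (x1 - xs))) - (fst (G (xs, ys)) + mu1 *\<^sub>R xs) \<bullet> (x1 - xs)
          + (snd (G (x1, y1)) \<bullet> (y1 - ys) + mu2 * (y1 \<bullet> (y1 - ys))) - (snd (G (xs, ys)) + mu2 *\<^sub>R ys) \<bullet> (y1 - ys))
         \<ge> - (C / m * (C + m) * (norm (yk - y1))\<^sup>2)"
proof -
  define a where "a = (x1, yk)"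
  define b where "b = (x1, y1)"
  define c where "c = (xs, ys)"
  define p where "p = norm (yk - y1)"
  define q where "q = norm (y1 - ys)"
  have t1: "g c \<ge> g a + G a \<bullet> (c - a)" by (rule tangent_ineq[OF cv deriv])
  have t2: "g b \<ge> g c + G c \<bullet> (b - c)" by (rule tangent_ineq[OF cv deriv])
  have de: "g b \<le> g a + G a \<bullet> (b - a) + C / 2 * (norm (b - a))\<^sup>2" by (rule descent_ineq[OF deriv Lip])
  have nba: "norm (b - a) = p" unfolding a_def b_def p_def by (simp add: norm_minus_commute)
  have "G a \<bullet> (b - a) - G a \<bullet> (c - a) = G a \<bullet> (b - c)" by (simp add: inner_diff_right)
  then have k1: "(G a - G c) \<bullet> (b - c) \<ge> - C / 2 * p\<^sup>2"
    using t1 t2 de nba by (simp add: inner_diff_left)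
  have bc: "b - c = (x1 - xs, y1 - ys)" unfolding b_def c_def by simp
  have k2: "(G a - G c) \<bullet> (b - c) = (fst (G a) - fst (G c)) \<bullet> (x1 - xs) + (snd (G a) - snd (G c)) \<bullet> (y1 - ys)"
    unfolding bc inner_pair_gen by (simp add: fst_diff snd_diff)
  have "norm (snd (G b) - snd (G a)) \<le> norm (G b - G a)"
    using norm_snd_le[of "snd (G b - G a)" "fst (G b - G a)"] unfolding prod.collapse by (simp only: snd_diff)
  also have "\<dots> \<le> C * p" using Lip[rule_format, of b a] nba by simp
  finally have "norm (snd (G b) - snd (G a)) \<le> C * p" .
  then have "norm (snd (G b) - snd (G a)) * q \<le> C * p * q" by (simp add: mult_right_mono q_def)
  moreover have "- ((snd (G b) - snd (G a)) \<bullet> (y1 - ys)) \<le> norm (snd (G b) - snd (G a)) * q"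
    unfolding q_def using Cauchy_Schwarz_ineq2[of "snd (G b) - snd (G a)" "y1 - ys"]
      abs_ge_minus_self[of "(snd (G b) - snd (G a)) \<bullet> (y1 - ys)"] by linarith
  ultimately have k3: "(snd (G b) - snd (G a)) \<bullet> (y1 - ys) \<ge> - (C * p * q)" by linarith
  have mu1t: "mu1 * (x1 \<bullet> (x1 - xs)) - (mu1 *\<^sub>R xs) \<bullet> (x1 - xs) \<ge> 0"
  proof -
    have "mu1 * (x1 \<bullet> (x1 - xs)) - (mu1 *\<^sub>R xs) \<bullet> (x1 - xs) = mu1 * ((x1 - xs) \<bullet> (x1 - xs))"
      by (simp add: inner_diff_left algebra_simps)
    then show ?thesis using mu1 by simp
  qed
  have mu2t: "mu2 * (y1 \<bullet> (y1 - ys)) - (mu2 *\<^sub>R ys) \<bullet> (y1 - ys) \<ge> m * q\<^sup>2"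
  proof -
    have "mu2 * (y1 \<bullet> (y1 - ys)) - (mu2 *\<^sub>R ys) \<bullet> (y1 - ys) = mu2 * q\<^sup>2"
      unfolding q_def power2_norm_eq_inner by (simp add: inner_diff_left algebra_simps)
    then show ?thesis using m by (simp add: mult_right_mono)
  qed
  have y: "- C * p\<^sup>2 - 2 * C * p * q + 2 * m * q\<^sup>2 \<ge> - (C / m * (C + m) * p\<^sup>2)"
    by (rule young_aux) (use m in \<open>auto simp: p_def q_def\<close>)
  have "(fst (G a) - fst (G c)) \<bullet> (x1 - xs) + (snd (G b) - snd (G c)) \<bullet> (y1 - ys) \<ge> - C / 2 * p\<^sup>2 - C * p * q"
    using k1 k2 k3 by (simp add: inner_diff_left)
  then show ?thesis using mu1t mu2t y unfolding a_def b_def c_def p_def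
    by (simp add: inner_diff_left inner_add_left) 
qed



lemma einner_comm: "einner E a b = einner E b a"
  unfolding einner_def by (simp add: inner_commute)
lemma einner_diff_left: "einner E (\<lambda>e. a e - b e) c = einner E a c - einner E b c"
  unfolding einner_def by (simp add: inner_diff_left sum_subtractf)
lemma einner_add_left: "einner E (\<lambda>e. a e + b e) c = einner E a c + einner E b c"
  unfolding einner_def by (simp add: inner_add_left sum.distrib)
lemma einner_neg_left: "einner E (\<lambda>e. - a e) c = - einner E a c"
  unfolding einner_def by (simp add: sum_negf)
lemma Acol_neg: "Acol E i (- a) e = - Acol E i a e"
  unfolding Acol_def by auto

theorem lemma2:
  fixes N :: nat and E :: "edge set"
    and f :: "nat \<Rightarrow> (real ^ 'n) \<times> (real ^ 'n) \<Rightarrow> real"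
    and grad :: "nat \<Rightarrow> (real ^ 'n) \<times> (real ^ 'n) \<Rightarrow> (real ^ 'n) \<times> (real ^ 'n)"
    and C :: "nat \<Rightarrow> real" and mu1 mu2 m rho gamma :: real
    and P Q :: "nat \<Rightarrow> real ^ 'n ^ 'n"
    and Wc Wh :: "nat \<Rightarrow> nat \<Rightarrow> real ^ 'n" and lam :: "nat \<Rightarrow> edge \<Rightarrow> real ^ 'n"
    and Wcs Whs :: "nat \<Rightarrow> real ^ 'n" and lams :: "edge \<Rightarrow> real ^ 'n"
    and k :: nat
  assumes "N \<ge> 2" and "connected_graph N E"
    and "\<forall>i\<in>{1..N}. \<forall>z. (f i has_derivative (\<lambda>h. grad i z \<bullet> h)) (at z)"
    and "\<forall>i\<in>{1..N}. convex_on UNIV (f i)"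
    and "\<forall>i\<in>{1..N}. \<forall>z1 z2. norm (grad i z1 - grad i z2) \<le> C i * norm (z1 - z2)"
    and "mu1 \<ge> 0" and "mu2 > 0" and "0 < m" and "m \<le> mu2"
    and "rho > 0" and "gamma > 0"
    and "\<forall>i\<in>{1..N}. psd_sym (P i) \<and> psd_sym (Q i)"
    and "alg_seq f mu1 mu2 N E rho gamma P Q Wc Wh lam"
    and "KKT grad mu1 mu2 N E Wcs Whs lams"
    and "k \<ge> 1"
  shows "normG N E rho gamma P Q (\<lambda>i. Wc k i - Wcs i) (\<lambda>i. Wh k i - Whs i) (\<lambda>e. lam k e - lams e)
       - normG N E rho gamma P Q (\<lambda>i. Wc (Suc k) i - Wcs i) (\<lambda>i. Wh (Suc k) i - Whs i)
           (\<lambda>e. lam (Suc k) e - lams e)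
       \<ge> normM N E rho gamma P Q C m (\<lambda>i. Wc k i - Wc (Suc k) i) (\<lambda>i. Wh k i - Wh (Suc k) i)
           (\<lambda>e. lam k e - lam (Suc k) e)"
proof -
  note asm = assms
  have V: "E \<subseteq> {(i,j). 1 \<le> i \<and> i < j \<and> j \<le> N}" using assms(2) unfolding connected_graph_def by blast
  have irr: "\<forall>e\<in>E. fst e \<noteq> snd e" using V by auto
  have A1: "\<forall>k. \<forall>i\<in>{1..N}. \<forall>w.
        Lag f mu1 mu2 N E rho ((Wc k)(i := Wc (Suc k) i)) (Wh k) (lam k)
          + 1/2 * qf (P i) (Wc (Suc k) i - Wc k i)
        \<le> Lag f mu1 mu2 N E rho ((Wc k)(i := w)) (Wh k) (lam k)
          + 1/2 * qf (P i) (w - Wc k i)"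
   and A2: "\<forall>k. \<forall>e\<in>E. lam (Suc k) e = lam k e - (gamma * rho) *\<^sub>R AW E (Wc (Suc k)) e"
   and A3: "\<forall>k. \<forall>i\<in>{1..N}. \<forall>v.
        Fi f mu1 mu2 i (Wc (Suc k) i) (Wh (Suc k) i) + 1/2 * qf (Q i) (Wh (Suc k) i - Wh k i)
        \<le> Fi f mu1 mu2 i (Wc (Suc k) i) v + 1/2 * qf (Q i) (v - Wh k i)"
    using assms(13) unfolding alg_seq_def by blast+
  have K1: "\<forall>e\<in>E. AW E Wcs e = 0"
   and K2: "\<forall>i\<in>{1..N}. ATi E i lams = fst (grad i (Wcs i, Whs i)) + mu1 *\<^sub>R Wcs i \<and>
                  snd (grad i (Wcs i, Whs i)) + mu2 *\<^sub>R Whs i = 0"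
    using assms(14) unfolding KKT_def by blast+
  define xt where "xt i = Wc (Suc k) i - Wcs i" for i
  define dx where "dx i = Wc k i - Wc (Suc k) i" for i
  define yt where "yt i = Wh (Suc k) i - Whs i" for i
  define dy where "dy i = Wh k i - Wh (Suc k) i" for i
  define lt where "lt e = lam (Suc k) e - lams e" for e
  define dl where "dl e = lam k e - lam (Suc k) e" for e
  define c where "c = 1 / (gamma * rho)"
  have gr: "gamma * rho > 0" using assms(10,11) by simp
  define RX where "RX i = einner E (\<lambda>e. lam k e - lams e) (Acol E i (xt i)) - rho * einner E (AW E (Wc k)) (Acol E i (xt i))
      + (rho * einner E (Acol E i (xt i)) (Acol E i (dx i)) + xt i \<bullet> (P i *v dx i))" for i
  define N3 where "N3 i = C i / m * (C i + m) * (norm (dy i))\<^sup>2" for i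
  have perI: "2 * (RX i + yt i \<bullet> (Q i *v dy i)) \<ge> - N3 i" if i: "i \<in> {1..N}" for i
  proof -
    have der: "\<forall>z. (f i has_derivative (\<lambda>h. grad i z \<bullet> h)) (at z)" using assms(3) i by blast
    have cvx: "convex_on UNIV (f i)" using assms(4) i by blast
    have Lip: "\<forall>z1 z2. norm (grad i z1 - grad i z2) \<le> C i * norm (z1 - z2)" using assms(5) i by blast
    have sP: "transpose (P i) = P i" and sQ: "transpose (Q i) = Q i"
      using assms(12) i unfolding psd_sym_def by auto
    have EA: "fst (grad i (Wc (Suc k) i, Wh k i)) \<bullet> xt i + mu1 * (Wc (Suc k) i \<bullet> xt i) - einner E (lam k) (Acol E i (xt i))
         + rho * einner E (AW E ((Wc k)(i := Wc (Suc k) i))) (Acol E i (xt i)) + (Wc (Suc k) i - Wc k i) \<bullet> (P i *v xt i) = 0"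
      by (rule opt_x[where P=P and f=f and grad=grad, OF V i der sP]) (use A1 i in blast)
    have EB: "snd (grad i (Wc (Suc k) i, Wh (Suc k) i)) \<bullet> yt i + mu2 * (Wh (Suc k) i \<bullet> yt i) + (Wh (Suc k) i - Wh k i) \<bullet> (Q i *v yt i) = 0"
      by (rule opt_y[where Q="Q i" and f=f and grad=grad, OF der sQ]) (use A3 i in blast)
    have upd: "(Wc k)(i := Wc (Suc k) i) = (Wc k)(i := Wc k i + 1 *\<^sub>R (- dx i))" by (simp add: dx_def)
    have AWu: "AW E ((Wc k)(i := Wc (Suc k) i)) = (\<lambda>e. AW E (Wc k) e + - Acol E i (dx i) e)"
      unfolding upd by (rule ext, subst AW_upd[OF irr]) (simp add: Acol_neg)
    have pP: "(Wc (Suc k) i - Wc k i) \<bullet> (P i *v xt i) = - (xt i \<bullet> (P i *v dx i))"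
      using qf_sym[OF sP, of "dx i" "xt i"] by (simp add: dx_def inner_diff_left algebra_simps)
    have pQ: "(Wh (Suc k) i - Wh k i) \<bullet> (Q i *v yt i) = - (yt i \<bullet> (Q i *v dy i))"
      using qf_sym[OF sQ, of "dy i" "yt i"] by (simp add: dy_def inner_diff_left algebra_simps)
    have kx: "(fst (grad i (Wcs i, Whs i)) + mu1 *\<^sub>R Wcs i) \<bullet> xt i = einner E lams (Acol E i (xt i))"
      using K2 i ATi_inner by metis
    have ky: "(snd (grad i (Wcs i, Whs i)) + mu2 *\<^sub>R Whs i) \<bullet> yt i = 0"
      using K2 i by simp
    have SX: "fst (grad i (Wc (Suc k) i, Wh k i)) \<bullet> xt i + mu1 * (Wc (Suc k) i \<bullet> xt i)
         - (fst (grad i (Wcs i, Whs i)) + mu1 *\<^sub>R Wcs i) \<bullet> xt i = RX i"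
    proof -
      have h1: "einner E (AW E ((Wc k)(i := Wc (Suc k) i))) (Acol E i (xt i))
          = einner E (AW E (Wc k)) (Acol E i (xt i)) - einner E (Acol E i (xt i)) (Acol E i (dx i))"
        unfolding AWu einner_add_left einner_neg_left using einner_comm by (metis diff_conv_add_uminus)
      then have h1': "rho * einner E (AW E ((Wc k)(i := Wc (Suc k) i))) (Acol E i (xt i))
          = rho * einner E (AW E (Wc k)) (Acol E i (xt i)) - rho * einner E (Acol E i (xt i)) (Acol E i (dx i))"
        by (simp add: right_diff_distrib)
      have h2: "einner E (\<lambda>e. lam k e - lams e) (Acol E i (xt i)) = einner E (lam k) (Acol E i (xt i)) - einner E lams (Acol E i (xt i))"
        by (rule einner_diff_left)
      show ?thesis unfolding RX_def using EA pP kx h1' h2 by linarith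
    qed
    have SY: "snd (grad i (Wc (Suc k) i, Wh (Suc k) i)) \<bullet> yt i + mu2 * (Wh (Suc k) i \<bullet> yt i)
         - (snd (grad i (Wcs i, Whs i)) + mu2 *\<^sub>R Whs i) \<bullet> yt i = yt i \<bullet> (Q i *v dy i)"
      using EB pQ ky by linarith
    note CV = conv_i[OF cvx der Lip assms(8,9,6), of "Wh k i" "Wh (Suc k) i" "Wc (Suc k) i" "Wcs i" "Whs i"]
    show ?thesis using CV SX[unfolded xt_def] SY[unfolded yt_def dy_def] unfolding N3_def dy_def yt_def by argo
  qed

  define Gx where "Gx = (\<Sum>i\<in>{1..N}. rho * einner E (Acol E i (xt i)) (Acol E i (dx i)) + xt i \<bullet> (P i *v dx i))"
  define Gy where "Gy = (\<Sum>i\<in>{1..N}. yt i \<bullet> (Q i *v dy i))"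
  define Nx where "Nx = (\<Sum>i\<in>{1..N}. rho * einner E (Acol E i (dx i)) (Acol E i (dx i)) + qf (P i) (dx i))"
  define Ny where "Ny = (\<Sum>i\<in>{1..N}. qf (Q i) (dy i))"
  define Tx where "Tx = (\<Sum>i\<in>{1..N}. rho * einner E (Acol E i (xt i)) (Acol E i (xt i)) + qf (P i) (xt i))"
  define Ty where "Ty = (\<Sum>i\<in>{1..N}. qf (Q i) (yt i))"
  define N3s where "N3s = (\<Sum>i\<in>{1..N}. N3 i)"
  define a1 where "a1 = einner E lt dl"
  define a2 where "a2 = einner E dl dl"
  define a3 where "a3 = einner E dl (AW E dx)"
  define lt2 where "lt2 = einner E lt lt"
  have S1: "2 * ((\<Sum>i\<in>{1..N}. RX i) + Gy) \<ge> - N3s"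
  proof -
    have "(\<Sum>i\<in>{1..N}. - N3 i) \<le> (\<Sum>i\<in>{1..N}. 2 * (RX i + yt i \<bullet> (Q i *v dy i)))"
      by (rule sum_mono) (use perI in auto)
    then show ?thesis unfolding N3s_def Gy_def by (simp add: sum_negf sum_distrib_left[symmetric] sum.distrib)
  qed
  have S2: "(\<Sum>i\<in>{1..N}. RX i) = einner E (\<lambda>e. lam k e - lams e) (AW E xt) - rho * einner E (AW E (Wc k)) (AW E xt) + Gx"
  proof -
    have i1: "(\<Sum>i\<in>{1..N}. einner E (\<lambda>e. lam k e - lams e) (Acol E i (xt i))) = einner E (\<lambda>e. lam k e - lams e) (AW E xt)"
      by (rule einner_sum_Acol[OF V])
    have i2: "(\<Sum>i\<in>{1..N}. einner E (AW E (Wc k)) (Acol E i (xt i))) = einner E (AW E (Wc k)) (AW E xt)"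
      by (rule einner_sum_Acol[OF V])
    show ?thesis unfolding RX_def Gx_def
      by (simp only: sum.distrib sum_subtractf sum_distrib_left[symmetric] i1 i2)
  qed
  have AWx1: "AW E (Wc (Suc k)) e = c *\<^sub>R dl e" if e: "e \<in> E" for e
  proof -
    have "dl e = (gamma * rho) *\<^sub>R AW E (Wc (Suc k)) e" using A2 e unfolding dl_def by simp
    then show ?thesis unfolding c_def using assms(10,11) by simp
  qed
  have AWxt: "AW E xt e = c *\<^sub>R dl e" if e: "e \<in> E" for e
  proof -
    have "AW E xt e = AW E (Wc (Suc k)) e - AW E Wcs e" unfolding AW_def xt_def using e by simp
    then show ?thesis using K1 e AWx1[OF e] by simp
  qed
  have AWxk: "AW E (Wc k) e = c *\<^sub>R dl e + AW E dx e" if e: "e \<in> E" for e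
  proof -
    have "AW E (Wc k) e = AW E (Wc (Suc k)) e + AW E dx e" unfolding AW_def dx_def using e by simp
    then show ?thesis using AWx1[OF e] by simp
  qed
  have S4: "einner E (\<lambda>e. lam k e - lams e) (AW E xt) = c * a1 + c * a2"
  proof -
    have "einner E (\<lambda>e. lam k e - lams e) (AW E xt) = (\<Sum>e\<in>E. c * (lt e \<bullet> dl e) + c * (dl e \<bullet> dl e))"
      unfolding einner_def
    proof (rule sum.cong[OF refl])
      fix e assume e: "e \<in> E"
      have "lam k e - lams e = lt e + dl e" unfolding lt_def dl_def by simp
      then show "(lam k e - lams e) \<bullet> AW E xt e = c * (lt e \<bullet> dl e) + c * (dl e \<bullet> dl e)"
        unfolding AWxt[OF e] by (simp add: inner_add_left distrib_left)
    qed
    then show ?thesis unfolding a1_def a2_def einner_def by (simp add: sum.distrib sum_distrib_left)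
  qed
  have S5: "einner E (AW E (Wc k)) (AW E xt) = c * c * a2 + c * a3"
  proof -
    have "einner E (AW E (Wc k)) (AW E xt) = (\<Sum>e\<in>E. c * c * (dl e \<bullet> dl e) + c * (dl e \<bullet> AW E dx e))"
      unfolding einner_def
    proof (rule sum.cong[OF refl])
      fix e assume e: "e \<in> E"
      show "AW E (Wc k) e \<bullet> AW E xt e = c * c * (dl e \<bullet> dl e) + c * (dl e \<bullet> AW E dx e)"
        unfolding AWxt[OF e] AWxk[OF e] by (simp add: inner_add_left inner_add_right inner_commute distrib_left mult.assoc)
    qed
    then show ?thesis unfolding a2_def a3_def einner_def by (simp add: sum.distrib sum_distrib_left)
  qed
  have S6: "normG N E rho gamma P Q (\<lambda>i. Wc k i - Wcs i) (\<lambda>i. Wh k i - Whs i) (\<lambda>e. lam k e - lams e)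
      = Tx + 2 * Gx + Nx + (Ty + 2 * Gy + Ny) + c * (lt2 + 2 * a1 + a2)"
  proof -
    have fx: "(\<lambda>i. Wc k i - Wcs i) = (\<lambda>i. xt i + dx i)" by (simp add: xt_def dx_def fun_eq_iff)
    have fy: "(\<lambda>i. Wh k i - Whs i) = (\<lambda>i. yt i + dy i)" by (simp add: yt_def dy_def fun_eq_iff)
    have fl: "(\<lambda>e. lam k e - lams e) = (\<lambda>e. lt e + dl e)" by (simp add: lt_def dl_def fun_eq_iff)
    have px: "rho * einner E (Acol E i (xt i + dx i)) (Acol E i (xt i + dx i)) + qf (P i) (xt i + dx i)
      = (rho * einner E (Acol E i (xt i)) (Acol E i (xt i)) + qf (P i) (xt i))
        + 2 * (rho * einner E (Acol E i (xt i)) (Acol E i (dx i)) + xt i \<bullet> (P i *v dx i))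
        + (rho * einner E (Acol E i (dx i)) (Acol E i (dx i)) + qf (P i) (dx i))" if i: "i \<in> {1..N}" for i
    proof -
      have sP: "transpose (P i) = P i" using assms(12) i unfolding psd_sym_def by auto
      have ac: "Acol E i (xt i + dx i) = (\<lambda>e. Acol E i (xt i) e + Acol E i (dx i) e)"
        by (rule ext, rule Acol_add)
      show ?thesis unfolding ac einner_expand qf_add[OF sP] by (simp add: algebra_simps)
    qed
    have py: "qf (Q i) (yt i + dy i) = qf (Q i) (yt i) + 2 * (yt i \<bullet> (Q i *v dy i)) + qf (Q i) (dy i)"
      if i: "i \<in> {1..N}" for i
    proof -
      have sQ: "transpose (Q i) = Q i" using assms(12) i unfolding psd_sym_def by auto
      show ?thesis by (rule qf_add[OF sQ])
    qed
    have sx: "(\<Sum>i\<in>{1..N}. rho * einner E (Acol E i (xt i + dx i)) (Acol E i (xt i + dx i)) + qf (P i) (xt i + dx i))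
       = Tx + 2 * Gx + Nx"
      unfolding Tx_def Gx_def Nx_def
      by (subst sum.cong[OF refl px], assumption) (simp only: sum.distrib sum_distrib_left[symmetric])
    have sy: "(\<Sum>i\<in>{1..N}. qf (Q i) (yt i + dy i)) = Ty + 2 * Gy + Ny"
      unfolding Ty_def Gy_def Ny_def
      by (subst sum.cong[OF refl py], assumption) (simp only: sum.distrib sum_distrib_left[symmetric])
    have sl: "einner E (\<lambda>e. lt e + dl e) (\<lambda>e. lt e + dl e) = lt2 + 2 * a1 + a2"
      unfolding einner_expand lt2_def a1_def a2_def ..
    show ?thesis unfolding normG_def fx fy fl sx sy sl c_def ..
  qed
  have S7: "normG N E rho gamma P Q (\<lambda>i. Wc (Suc k) i - Wcs i) (\<lambda>i. Wh (Suc k) i - Whs i) (\<lambda>e. lam (Suc k) e - lams e)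
      = Tx + Ty + c * lt2"
    unfolding normG_def Tx_def Ty_def lt2_def c_def xt_def yt_def lt_def ..
  have S8: "normM N E rho gamma P Q C m (\<lambda>i. Wc k i - Wc (Suc k) i) (\<lambda>i. Wh k i - Wh (Suc k) i) (\<lambda>e. lam k e - lam (Suc k) e)
      = Nx + (Ny - N3s) + (2 - gamma) / (gamma\<^sup>2 * rho) * a2 + 2 / gamma * a3"
    unfolding normM_def Nx_def Ny_def N3s_def N3_def a2_def a3_def dx_def dy_def dl_def
    by (simp add: sum_subtractf)
  have rc: "rho * c = 1 / gamma" unfolding c_def using assms(10) by simp
  have E1: "rho * (c * c * a2 + c * a3) = (c / gamma) * a2 + (1 / gamma) * a3"
    using rc by (simp add: algebra_simps)
  have E2: "(2 - gamma) / (gamma\<^sup>2 * rho) * a2 = 2 * ((c / gamma) * a2) - c * a2"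
    unfolding c_def using assms(10,11) by (simp add: field_simps power2_eq_square)
  have E3: "2 / gamma * a3 = 2 * ((1 / gamma) * a3)" by simp
  have E4: "c * (lt2 + 2 * a1 + a2) = c * lt2 + 2 * (c * a1) + c * a2" by (simp add: algebra_simps)
  have S5': "rho * einner E (AW E (Wc k)) (AW E xt) = rho * (c * c * a2 + c * a3)" by (simp only: S5)
  show ?thesis unfolding S6 S7 S8 using S1 S2 S4 S5' E1 E2 E3 E4 by argo
qed

end
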